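(* Let $V$ be a vertex operator algebra of CFT type which is strongly generated by a homogeneous subspace $U\subseteq V_+$. Let $M=\bigoplus_{n\ge0}M(n)$ be an admissible $V$-module such that $M=W+C_1(M)$ for some homogeneous subspace $W\subseteq M$. Then $M$ is spanned by the elements $u^1_{-n_1}\cdots u^r_{-n_r}w$ with $r\ge0$, $n_i\ge1$, $u^i\in U$ and $w\in W$ homogeneous. In particular, $M$ is strongly generated by $W$.
   Context: $V=\bigoplus_{n\ge0}V_n$ is of CFT type if $V_0=\mathbb{C}\mathbf{1}$; $V_+=\bigoplus_{n\ge1}V_n$. $V$ is strongly generated by $U$ if $V$ is spanned by $a^1_{-n_1}\cdots a^r_{-n_r}\mathbf{1}$ with $r\ge0$, $a^i\in U$, $n_i\ge1$ (where $Y(a,z)=\sum_na_nz^{-n-1}$). For the admissible module $M=\bigoplus_{n\ge0}M(n)$, $Y_M(a,z)=\sum_na_nz^{-n-1}$ and $a_nM(m)\subseteq M(m+\mathrm{wt}\,a-n-1)$ for homogeneous $a$; a homogeneous subspace means one spanned by elements lying in the $M(n)$. $C_1(M)$ is the span of $a_{-1}v$ for homogeneous $a\in V_+$ and $v\in M$. $M$ is strongly generated by a subset $W\subseteq M$ if $M$ is spanned by $a^1_{-n_1}\cdots a^k_{-n_k}w$ with $k\ge0$, $a^i\in V_+$ homogeneous, $n_i\ge1$, $w\in W$. *)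

theory Defs
  imports Complex_Main
begin

text \<open>Vertex operators Y(a,z) = sum_n a_n z^(-n-1) are modelled by their modes:
  Y a n v = a_n v (n an integer).\<close>

definition graded :: "(complex \<Rightarrow> 'b \<Rightarrow> 'b::ab_group_add) \<Rightarrow> (int \<Rightarrow> 'b set) \<Rightarrow> bool" where
  "graded s G \<longleftrightarrow>
     (\<forall>n. module.subspace s (G n)) \<and>
     (\<forall>S x. finite S \<and> (\<forall>i\<in>S. x i \<in> G i) \<and> (\<Sum>i\<in>S. x i) = 0 \<longrightarrow> (\<forall>i\<in>S. x i = 0)) \<and>
     module.span s (\<Union>n. G n) = UNIV"

definition truncated :: "('v \<Rightarrow> int \<Rightarrow> 'm \<Rightarrow> 'm::zero) \<Rightarrow> bool" where
  "truncated Y \<longleftrightarrow> (\<forall>a v. \<exists>N. \<forall>n\<ge>N. Y a n v = 0)"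

text \<open>Both sums are finite by truncation; this is expressed by requiring equality of
  all sufficiently long partial sums.\<close>
definition borcherds :: "(complex \<Rightarrow> 'm \<Rightarrow> 'm::ab_group_add) \<Rightarrow> ('v \<Rightarrow> int \<Rightarrow> 'v \<Rightarrow> 'v)
    \<Rightarrow> ('v \<Rightarrow> int \<Rightarrow> 'm \<Rightarrow> 'm) \<Rightarrow> bool" where
  "borcherds s YV YM \<longleftrightarrow> (\<forall>a b w m n k. \<exists>N0. \<forall>N\<ge>N0.
     (\<Sum>i<N. s ((of_int m) gchoose i) (YM (YV a (k + int i) b) (m + n - int i) w)) =
     (\<Sum>i<N. s ((-1)^i * ((of_int k) gchoose i)) (YM a (m + k - int i) (YM b (n + int i) w))
            - s ((-1)^i * ((of_int k) gchoose i) * ((-1) powi k)) (YM b (n + k - int i) (YM a (m + int i) w))))"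

definition is_VOA :: "(complex \<Rightarrow> 'v \<Rightarrow> 'v::ab_group_add) \<Rightarrow> (int \<Rightarrow> 'v set)
    \<Rightarrow> ('v \<Rightarrow> int \<Rightarrow> 'v \<Rightarrow> 'v) \<Rightarrow> 'v \<Rightarrow> 'v \<Rightarrow> bool" where
  "is_VOA s V Y vac \<omega> \<longleftrightarrow>
     vector_space s \<and> graded s V \<and>
     (\<forall>n. \<exists>B. finite B \<and> V n \<subseteq> module.span s B) \<and>
     (\<exists>N. \<forall>n<N. V n = {0}) \<and>
     (\<forall>a n. Vector_Spaces.linear s s (Y a n)) \<and>
     (\<forall>n v. Vector_Spaces.linear s s (\<lambda>a. Y a n v)) \<and>
     truncated Y \<and>
     (\<forall>n v. Y vac n v = (if n = -1 then v else 0)) \<and>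
     (\<forall>a. Y a (-1) vac = a \<and> (\<forall>n\<ge>0. Y a n vac = 0)) \<and>
     borcherds s Y Y \<and>
     \<omega> \<in> V 2 \<and>
     (\<exists>c::complex. \<forall>m n v.
        Y \<omega> (m+1) (Y \<omega> (n+1) v) - Y \<omega> (n+1) (Y \<omega> (m+1) v) =
          s (of_int (m - n)) (Y \<omega> (m+n+1) v) +
          (if m + n = 0 then s (((of_int m)^3 - of_int m) / 12 * c) v else 0)) \<and>
     (\<forall>n. \<forall>v\<in>V n. Y \<omega> 1 v = s (of_int n) v) \<and>
     (\<forall>a n v. Y (Y \<omega> 0 a) n v = s (- of_int n) (Y a (n - 1) v))"

definition cft_type :: "(complex \<Rightarrow> 'v \<Rightarrow> 'v::ab_group_add) \<Rightarrow> (int \<Rightarrow> 'v set) \<Rightarrow> 'v \<Rightarrow> bool" where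
  "cft_type s V vac \<longleftrightarrow> (\<forall>n<0. V n = {0}) \<and> V 0 = module.span s {vac}"

definition Vplus :: "(complex \<Rightarrow> 'v \<Rightarrow> 'v::ab_group_add) \<Rightarrow> (int \<Rightarrow> 'v set) \<Rightarrow> 'v set" where
  "Vplus s V = module.span s (\<Union>n\<in>{1..}. V n)"

definition is_admissible :: "(complex \<Rightarrow> 'v \<Rightarrow> 'v::ab_group_add) \<Rightarrow> (int \<Rightarrow> 'v set)
    \<Rightarrow> ('v \<Rightarrow> int \<Rightarrow> 'v \<Rightarrow> 'v) \<Rightarrow> 'v
    \<Rightarrow> (complex \<Rightarrow> 'm \<Rightarrow> 'm::ab_group_add) \<Rightarrow> (int \<Rightarrow> 'm set) \<Rightarrow> ('v \<Rightarrow> int \<Rightarrow> 'm \<Rightarrow> 'm) \<Rightarrow> bool" where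
  "is_admissible s V Y vac sM M YM \<longleftrightarrow>
     vector_space sM \<and> graded sM M \<and> (\<forall>n<0. M n = {0}) \<and>
     (\<forall>a n. Vector_Spaces.linear sM sM (YM a n)) \<and>
     (\<forall>n w. Vector_Spaces.linear s sM (\<lambda>a. YM a n w)) \<and>
     truncated YM \<and>
     (\<forall>n w. YM vac n w = (if n = -1 then w else 0)) \<and>
     borcherds sM Y YM \<and>
     (\<forall>k a n m. a \<in> V k \<longrightarrow> YM a n ` M m \<subseteq> M (m + k - n - 1))"

definition homogeneous_subspace :: "(complex \<Rightarrow> 'b \<Rightarrow> 'b::ab_group_add) \<Rightarrow> (int \<Rightarrow> 'b set) \<Rightarrow> 'b set \<Rightarrow> bool" where
  "homogeneous_subspace s G W \<longleftrightarrow> module.subspace s W \<and> W = module.span s (W \<inter> (\<Union>n. G n))"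

definition modes :: "('v \<Rightarrow> int \<Rightarrow> 'm \<Rightarrow> 'm) \<Rightarrow> ('v \<times> nat) list \<Rightarrow> 'm \<Rightarrow> 'm" where
  "modes Y l x = foldr (\<lambda>(a, n) y. Y a (- int n) y) l x"

definition C1 :: "(complex \<Rightarrow> 'v \<Rightarrow> 'v::ab_group_add) \<Rightarrow> (int \<Rightarrow> 'v set)
    \<Rightarrow> (complex \<Rightarrow> 'm \<Rightarrow> 'm::ab_group_add) \<Rightarrow> ('v \<Rightarrow> int \<Rightarrow> 'm \<Rightarrow> 'm) \<Rightarrow> 'm set" where
  "C1 s V sM YM = module.span sM {YM a (-1) v | a v. a \<in> Vplus s V \<and> (\<exists>n. a \<in> V n)}"

end

theory Submission
  imports Defs
begin


lemma lin_span:
  assumes lin: "Vector_Spaces.linear sA sB f"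
    and x: "x \<in> module.span sA A"
    and h: "\<And>a. a \<in> A \<Longrightarrow> f a \<in> module.span sB B"
  shows "f x \<in> module.span sB B"
proof -
  interpret L: Vector_Spaces.linear sA sB f by (rule lin)
  from x show ?thesis
  proof (induct rule: L.vs1.span_induct_alt)
    case base
    then show ?case by (simp add: L.zero L.vs2.span_zero)
  next
    case (step c x y)
    then show ?case
      by (simp add: L.add L.scale L.vs2.span_add L.vs2.span_scale h)
  qed
qed

lemma span_sub:
  assumes "vector_space sA" and "\<And>a. a \<in> A \<Longrightarrow> a \<in> module.span sA B"
  shows "module.span sA A \<subseteq> module.span sA B"
proof -
  interpret vector_space sA by fact
  show ?thesis using assms(2) by (meson span_minimal subset_eq subspace_span)
qed

lemma graded_unique:
  assumes "graded sG G" "x \<in> G a" "x \<in> G b" "a \<noteq> b" and vs: "vector_space sG"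
  shows "x = 0"
proof -
  interpret vector_space sG by (rule vs)
  have ind: "\<And>S x. finite S \<Longrightarrow> (\<forall>i\<in>S. x i \<in> G i) \<Longrightarrow> (\<Sum>i\<in>S. x i) = 0 \<Longrightarrow> (\<forall>i\<in>S. x i = 0)"
    using assms(1) unfolding graded_def by blast
  have sub: "module.subspace sG (G b)" using assms(1) unfolding graded_def by blast
  define z where "z = (\<lambda>i. if i = a then x else - x)"
  have "\<forall>i\<in>{a,b}. z i = 0"
    apply (rule ind)
    using assms sub by (auto simp: z_def intro: subspace_neg)
  then show ?thesis by (simp add: z_def)
qed

lemma graded_proj:
  assumes vs: "vector_space sG" and gr: "graded sG G" and xN: "x \<in> G N"
    and xB: "x \<in> module.span sG B" and hom: "\<And>b. b \<in> B \<Longrightarrow> \<exists>e. b \<in> G e"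
  shows "x \<in> module.span sG {b\<in>B. b \<in> G N}"
proof -
  interpret vector_space sG by (rule vs)
  have ind: "\<And>S x. finite S \<Longrightarrow> (\<forall>i\<in>S. x i \<in> G i) \<Longrightarrow> (\<Sum>i\<in>S. x i) = 0 \<Longrightarrow> (\<forall>i\<in>S. x i = 0)"
    using gr unfolding graded_def by blast
  have sub: "\<And>n. subspace (G n)" using gr unfolding graded_def by blast
  from xB obtain t r where t: "finite t" "t \<subseteq> B" and xe: "x = (\<Sum>a\<in>t. sG (r a) a)"
    unfolding span_explicit by blast
  define deg where "deg = (\<lambda>b. SOME e. b \<in> G e)"
  have degG: "\<And>b. b \<in> t \<Longrightarrow> b \<in> G (deg b)"
    unfolding deg_def using hom t(2) by (metis someI_ex subsetD)
  define E where "E = insert N (deg ` t)"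
  have fE: "finite E" using t by (simp add: E_def)
  define y where "y = (\<lambda>e. (\<Sum>a\<in>{a. a \<in> t \<and> deg a = e}. sG (r a) a))"
  define z where "z = (\<lambda>e. y e - (if e = N then x else 0))"
  have yG: "y e \<in> G e" for e
    unfolding y_def by (rule subspace_sum[OF sub]) (auto intro: subspace_scale[OF sub] degG)
  have zG: "\<forall>e\<in>E. z e \<in> G e"
    using yG xN by (auto simp: z_def intro: subspace_diff[OF sub] subspace_0[OF sub])
  have "(\<Sum>e\<in>E. y e) = (\<Sum>a\<in>t. sG (r a) a)"
    unfolding y_def by (rule sum.group) (use t fE in \<open>auto simp: E_def\<close>)
  moreover have "(\<Sum>e\<in>E. (if e = N then x else 0)) = x"
    using fE by (simp add: E_def)
  ultimately have "(\<Sum>e\<in>E. z e) = 0"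
    by (simp add: z_def sum_subtractf xe)
  then have "z N = 0" using ind[OF fE zG] by (simp add: E_def)
  then have "x = y N" by (simp add: z_def)
  also have "y N \<in> span {b\<in>B. b \<in> G N}"
    unfolding y_def
    by (rule span_sum, rule span_scale, rule span_base) (use t degG in auto)
  finally show ?thesis .
qed



locale P42 =
  fixes s :: "complex \<Rightarrow> 'v \<Rightarrow> 'v::ab_group_add"
    and V :: "int \<Rightarrow> 'v set" and Y :: "'v \<Rightarrow> int \<Rightarrow> 'v \<Rightarrow> 'v" and vac \<omega> :: 'v
    and sM :: "complex \<Rightarrow> 'm \<Rightarrow> 'm::ab_group_add"
    and M :: "int \<Rightarrow> 'm set" and YM :: "'v \<Rightarrow> int \<Rightarrow> 'm \<Rightarrow> 'm"
    and U :: "'v set" and W :: "'m set"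
  assumes A1: "is_VOA s V Y vac \<omega>"
    and A2: "cft_type s V vac"
    and A3: "homogeneous_subspace s V U"
    and A4: "U \<subseteq> Vplus s V"
    and A5: "module.span s {modes Y l vac | l. \<forall>(a, n)\<in>set l. a \<in> U \<and> n \<ge> 1} = UNIV"
    and A6: "is_admissible s V Y vac sM M YM"
    and A7: "homogeneous_subspace sM M W"
    and A8: "UNIV = {w + c | w c. w \<in> W \<and> c \<in> C1 s V sM YM}"
begin

lemma vsV: "vector_space s" using A1 by (simp add: is_VOA_def)
lemma grV: "graded s V" using A1 by (simp add: is_VOA_def)
lemma linY1: "Vector_Spaces.linear s s (Y a n)" using A1 by (simp add: is_VOA_def)
lemma linY2: "Vector_Spaces.linear s s (\<lambda>a. Y a n v)" using A1 by (simp add: is_VOA_def)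
lemma Vneg: "n < 0 \<Longrightarrow> V n = {0}" using A2 by (simp add: cft_type_def)
lemma vacV: "vac \<in> V 0"
proof -
  interpret vector_space s by (rule vsV)
  show ?thesis using A2 by (simp add: cft_type_def span_base)
qed
lemma vsM: "vector_space sM" using A6 by (simp add: is_admissible_def)
lemma modM: "module sM" using vsM by (simp add: module_iff_vector_space)
lemma grM: "graded sM M" using A6 by (simp add: is_admissible_def)
lemma Mneg: "n < 0 \<Longrightarrow> M n = {0}" using A6 by (simp add: is_admissible_def)
lemma linM1: "Vector_Spaces.linear sM sM (YM a n)" using A6 by (simp add: is_admissible_def)
lemma linM2: "Vector_Spaces.linear s sM (\<lambda>a. YM a n w)" using A6 by (simp add: is_admissible_def)
lemma YMvac: "YM vac n w = (if n = -1 then w else 0)" using A6 by (simp add: is_admissible_def)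
lemma borch: "borcherds sM Y YM" using A6 by (simp add: is_admissible_def)
lemma gradM: "a \<in> V k \<Longrightarrow> x \<in> M e \<Longrightarrow> e' = e + k - n - 1 \<Longrightarrow> YM a n x \<in> M e'"
  using A6 unfolding is_admissible_def by blast

lemma subM: "module.subspace sM (M n)" using grM by (simp add: graded_def)
lemma subV: "module.subspace s (V n)" using grV by (simp add: graded_def)

lemma YM0a: "YM 0 n x = 0"
proof -
  interpret Vector_Spaces.linear s sM "\<lambda>a. YM a n x" by (rule linM2)
  show ?thesis using zero by simp
qed
lemma YM0x: "YM a n 0 = 0"
proof -
  interpret Vector_Spaces.linear sM sM "YM a n" by (rule linM1)
  show ?thesis using zero by simp
qed
lemma Y0a: "Y 0 n x = 0"
proof -
  interpret Vector_Spaces.linear s s "\<lambda>a. Y a n x" by (rule linY2)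
  show ?thesis using zero by simp
qed
lemma Y0x: "Y a n 0 = 0"
proof -
  interpret Vector_Spaces.linear s s "Y a n" by (rule linY1)
  show ?thesis using zero by simp
qed

lemma Vplus0: assumes "a \<in> Vplus s V" "a \<in> V k" "k \<le> 0" shows "a = 0"
proof (cases "k < 0")
  case True then show ?thesis using Vneg assms by auto
next
  case False
  then have k0: "k = 0" using assms by simp
  have "a \<in> module.span s {b \<in> (\<Union>n\<in>{1..}. V n). b \<in> V 0}"
    apply (rule graded_proj[OF vsV grV])
    using assms k0 by (auto simp: Vplus_def)
  moreover have "{b \<in> (\<Union>n\<in>{1..}. V n). b \<in> V 0} \<subseteq> {0}"
    using graded_unique[OF grV _ _ _ vsV] by fastforce
  ultimately show ?thesis
  proof -
    interpret vector_space s by (rule vsV)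
    assume "a \<in> span {b \<in> (\<Union>n\<in>{1..}. V n). b \<in> V 0}" "{b \<in> (\<Union>n\<in>{1..}. V n). b \<in> V 0} \<subseteq> {0}"
    then have "a \<in> span {0}" using span_mono by blast
    then show ?thesis by simp
  qed
qed


definition "Tset = module.span sM {modes YM l w | l w. (\<forall>(u,n)\<in>set l. u \<in> U \<and> (\<exists>p. u \<in> V p) \<and> n \<ge> 1) \<and> w \<in> W \<and> (\<exists>k. w \<in> M k)}"

lemma T_sub: "module.subspace sM Tset"
proof -
  interpret vector_space sM by (rule vsM)
  show ?thesis unfolding Tset_def by simp
qed

lemma T_closed:
  assumes "u \<in> U" "u \<in> V p" "n \<ge> 1" "x \<in> Tset"
  shows "YM u (- int n) x \<in> Tset"
  using assms(4) unfolding Tset_def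
proof (rule lin_span[OF linM1])
  fix g assume "g \<in> {modes YM l w | l w. (\<forall>(u,n)\<in>set l. u \<in> U \<and> (\<exists>p. u \<in> V p) \<and> n \<ge> 1) \<and> w \<in> W \<and> (\<exists>k. w \<in> M k)}"
  then obtain l w where g: "g = modes YM l w" "\<forall>(u,n)\<in>set l. u \<in> U \<and> (\<exists>p. u \<in> V p) \<and> n \<ge> 1" "w \<in> W" "\<exists>k. w \<in> M k"
    by blast
  have "YM u (- int n) g = modes YM ((u,n)#l) w" using g(1) by (simp add: modes_def)
  moreover have "modes YM ((u,n)#l) w \<in> {modes YM l w | l w. (\<forall>(u,n)\<in>set l. u \<in> U \<and> (\<exists>p. u \<in> V p) \<and> n \<ge> 1) \<and> w \<in> W \<and> (\<exists>k. w \<in> M k)}"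
    using g assms by fastforce
  ultimately show "YM u (- int n) g \<in> module.span sM {modes YM l w | l w. (\<forall>(u,n)\<in>set l. u \<in> U \<and> (\<exists>p. u \<in> V p) \<and> n \<ge> 1) \<and> w \<in> W \<and> (\<exists>k. w \<in> M k)}"
    using module.span_base[OF modM] by simp
qed

definition "GenV = insert vac {Y u (- int m) b | u m b. u \<in> U \<and> (\<exists>p\<ge>1. u \<in> V p) \<and> (\<exists>q. b \<in> V q) \<and> m \<ge> 1}"

lemma decomp: "a \<in> module.span s GenV"
proof -
  interpret vector_space s by (rule vsV)
  have "modes Y l vac \<in> span GenV" if l: "\<forall>(a, n)\<in>set l. a \<in> U \<and> n \<ge> 1" for l
  proof (cases l)
    case Nil then show ?thesis by (simp add: modes_def GenV_def span_base)
  next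
    case (Cons h l')
    obtain u m where h: "h = (u, m)" by fastforce
    define b where "b = modes Y l' vac"
    have e: "modes Y l vac = Y u (- int m) b" by (simp add: Cons h b_def modes_def)
    have um: "u \<in> U" "m \<ge> 1" using l Cons h by auto
    have uspan: "u \<in> span (U \<inter> (\<Union>n. V n))" using A3 um by (simp add: homogeneous_subspace_def)
    have "Y u (- int m) b \<in> span GenV"
      using uspan
    proof (rule lin_span[OF linY2])
      fix a' assume a': "a' \<in> U \<inter> (\<Union>n. V n)"
      have "b \<in> span (\<Union>n. V n)" using grV by (simp add: graded_def)
      then show "Y a' (- int m) b \<in> span GenV"
      proof (rule lin_span[OF linY1])
        fix b' assume "b' \<in> (\<Union>n. V n)"
        then obtain q where q: "b' \<in> V q" by blast
        from a' obtain p where p: "a' \<in> V p" "a' \<in> U" by blast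
        show "Y a' (- int m) b' \<in> span GenV"
        proof (cases "p \<ge> 1")
          case True
          then show ?thesis using p q um by (intro span_base) (auto simp: GenV_def)
        next
          case False
          then have "a' = 0" using Vplus0[of a' p] p A4 by auto
          then show ?thesis by (simp add: Y0a span_zero)
        qed
      qed
    qed
    then show ?thesis using e by simp
  qed
  then have "span {modes Y l vac | l. \<forall>(a, n)\<in>set l. a \<in> U \<and> n \<ge> 1} \<subseteq> span GenV"
    by (intro span_sub[OF vsV]) blast
  then show ?thesis using A5 by auto
qed

lemma borch_spec:
  "\<exists>c1 c2 N. YM (Y u (- int m) b) j v =
     (\<Sum>i<N. sM (c1 i) (YM u (- int m - int i) (YM b (j + int i) v))
            - sM (c2 i) (YM b (j - int m - int i) (YM u (int i) v)))"
proof -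
  interpret vector_space sM by (rule vsM)
  obtain N0 where N0: "\<forall>N\<ge>N0.
     (\<Sum>i<N. sM ((of_int 0) gchoose i) (YM (Y u (- int m + int i) b) (0 + j - int i) v)) =
     (\<Sum>i<N. sM ((-1)^i * ((of_int (- int m)) gchoose i)) (YM u (0 + (- int m) - int i) (YM b (j + int i) v))
            - sM ((-1)^i * ((of_int (- int m)) gchoose i) * ((-1) powi (- int m))) (YM b (j + (- int m) - int i) (YM u (0 + int i) v)))"
    using borch unfolding borcherds_def by blast
  have "(\<Sum>i<Suc N0. sM ((of_int 0) gchoose i) (YM (Y u (- int m + int i) b) (0 + j - int i) v))
        = (\<Sum>i<Suc N0. (if i = 0 then YM (Y u (- int m) b) j v else 0))"
    by (rule sum.cong) (auto simp: gbinomial_0_left)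
  also have "\<dots> = YM (Y u (- int m) b) j v" by (simp add: sum.delta')
  finally show ?thesis using N0[rule_format, of "Suc N0"]
    by (intro exI[of _ "\<lambda>i. (-1)^i * ((of_int (- int m)) gchoose i)"]
          exI[of _ "\<lambda>i. (-1)^i * ((of_int (- int m)) gchoose i) * ((-1) powi (- int m))"] exI[of _ "Suc N0"])
       (simp add: algebra_simps)
qed


lemma prod_hom:
  assumes u: "u \<in> V p" and b: "b \<in> V q" and v: "v \<in> M d"
  shows "YM (Y u (- int m) b) j v \<in> M (d + p + q + int m - j - 2)"
proof -
  interpret vector_space sM by (rule vsM)
  obtain c1 c2 N where e: "YM (Y u (- int m) b) j v =
     (\<Sum>i<N. sM (c1 i) (YM u (- int m - int i) (YM b (j + int i) v))
            - sM (c2 i) (YM b (j - int m - int i) (YM u (int i) v)))"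
    using borch_spec by blast
  show ?thesis unfolding e
  proof (rule subspace_sum[OF subM], rule subspace_diff[OF subM]; rule subspace_scale[OF subM])
    fix i
    have "YM b (j + int i) v \<in> M (d + q - (j + int i) - 1)" by (rule gradM[OF b v]) simp
    then show "YM u (- int m - int i) (YM b (j + int i) v) \<in> M (d + p + q + int m - j - 2)"
      by (rule gradM[OF u]) simp
    have "YM u (int i) v \<in> M (d + p - int i - 1)" by (rule gradM[OF u v]) simp
    then show "YM b (j - int m - int i) (YM u (int i) v) \<in> M (d + p + q + int m - j - 2)"
      by (rule gradM[OF b]) simp
  qed
qed

lemma inner:
  assumes H: "\<forall>d<n. M d \<subseteq> Tset"
  shows "\<forall>a \<in> V (int K). \<forall>j \<le> -1. \<forall>d < n. \<forall>v \<in> M d. d + int K - j - 1 \<le> n \<longrightarrow> YM a j v \<in> Tset"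
proof (induction K rule: less_induct)
  case (less K)
  interpret vector_space sM by (rule vsM)
  show ?case
  proof (intro ballI allI impI)
    fix a j d v assume a: "a \<in> V (int K)" and j: "j \<le> -1" and d: "d < n" and v: "v \<in> M d"
      and deg: "d + int K - j - 1 \<le> n"
    define N0 where "N0 = d + int K - j - 1"
    have yN: "YM a j v \<in> M N0" using gradM[OF a v] N0_def by simp
    define B where "B = {YM g j v | g. g \<in> GenV}"
    have yB: "YM a j v \<in> span B"
      using decomp[of a]
    proof (rule lin_span[OF linM2])
      fix g assume "g \<in> GenV" then show "YM g j v \<in> span B" unfolding B_def by (blast intro: span_base)
    qed
    have hom: "\<exists>e. y \<in> M e" if "y \<in> B" for y
    proof -
      from that obtain g where g: "y = YM g j v" "g \<in> GenV" unfolding B_def by blast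
      show ?thesis
      proof (cases "g = vac")
        case True
        then show ?thesis using g v by (auto simp: YMvac subspace_0[OF subM])
      next
        case False
        then obtain u m b p q where "g = Y u (- int m) b" "u \<in> V p" "b \<in> V q"
          using g(2) unfolding GenV_def by blast
        then show ?thesis using g prod_hom v by blast
      qed
    qed
    have yP: "YM a j v \<in> span {y\<in>B. y \<in> M N0}"
      by (rule graded_proj[OF vsM grM yN yB hom])
    have "span {y\<in>B. y \<in> M N0} \<subseteq> Tset"
    proof (rule span_minimal[OF _ T_sub], rule subsetI)
      fix y assume "y \<in> {y\<in>B. y \<in> M N0}"
      then obtain g where g: "y = YM g j v" "g \<in> GenV" and yN0: "y \<in> M N0" unfolding B_def by blast
      show "y \<in> Tset"
      proof (cases "g = vac")
        case True
        then show ?thesis using g v H d by (auto simp: YMvac subspace_0[OF T_sub])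
      next
        case False
        then obtain u m b p q where gg: "g = Y u (- int m) b" and uU: "u \<in> U" and p: "p \<ge> 1" "u \<in> V p"
          and bq: "b \<in> V q" and m: "m \<ge> 1"
          using g(2) unfolding GenV_def by blast
        show ?thesis
        proof (cases "y = 0")
          case True then show ?thesis by (simp add: subspace_0[OF T_sub])
        next
          case y0: False
          have "y \<in> M (d + p + q + int m - j - 2)" using g gg prod_hom[OF p(2) bq v] by simp
          then have N0e: "N0 = d + p + q + int m - j - 2"
            using graded_unique[OF grM yN0 _ _ vsM] y0 by blast
          have q0: "q \<ge> 0"
          proof (rule ccontr)
            assume "\<not> q \<ge> 0"
            then have "b = 0" using bq Vneg by auto
            then have "y = 0" using g gg by (simp add: Y0x YM0a)
            then show False using y0 by simp
          qed
          define Q where "Q = nat q"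
          have Qq: "int Q = q" using q0 Q_def by simp
          have QK: "Q < K" using N0e N0_def p m Qq by linarith
          have bQ: "b \<in> V (int Q)" using bq Qq by simp
          obtain c1 c2 Nn where e: "YM (Y u (- int m) b) j v =
             (\<Sum>i<Nn. sM (c1 i) (YM u (- int m - int i) (YM b (j + int i) v))
                    - sM (c2 i) (YM b (j - int m - int i) (YM u (int i) v)))"
            using borch_spec by blast
          show ?thesis unfolding g gg e
          proof (rule subspace_sum[OF T_sub], rule subspace_diff[OF T_sub]; rule subspace_scale[OF T_sub])
            fix i
            have x1: "YM b (j + int i) v \<in> M (d + q - (j + int i) - 1)" by (rule gradM[OF bq v]) simp
            have "d + q - (j + int i) - 1 < n" using N0e N0_def deg p m by linarith
            then have xT: "YM b (j + int i) v \<in> Tset" using H x1 by blast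
            have "YM u (- int (m + i)) (YM b (j + int i) v) \<in> Tset"
              by (rule T_closed[OF uU p(2) _ xT]) (use m in simp)
            then show "YM u (- int m - int i) (YM b (j + int i) v) \<in> Tset" by simp
            have x2: "YM u (int i) v \<in> M (d + p - int i - 1)" by (rule gradM[OF p(2) v]) simp
            have d2: "d + p - int i - 1 < n" using N0e N0_def deg q0 m j by linarith
            show "YM b (j - int m - int i) (YM u (int i) v) \<in> Tset"
            proof -
              have "j - int m - int i \<le> -1" using m j by simp
              moreover have "(d + p - int i - 1) + int Q - (j - int m - int i) - 1 \<le> n"
                using N0e N0_def deg Qq by linarith
              ultimately show ?thesis using less.IH[OF QK] bQ x2 d2 by blast
            qed
          qed
        qed
      qed
    qed
    then show "YM a j v \<in> Tset" using yP by blast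
  qed
qed


lemma Mneg_T: "n < 0 \<Longrightarrow> M n \<subseteq> Tset"
  using Mneg module.subspace_0[OF modM T_sub] by auto

lemma outer: "M (int N) \<subseteq> Tset"
proof (induction N rule: less_induct)
  case (less N)
  interpret vector_space sM by (rule vsM)
  define n where "n = int N"
  have H: "\<forall>d<n. M d \<subseteq> Tset"
  proof (intro allI impI)
    fix d assume "d < n"
    show "M d \<subseteq> Tset"
    proof (cases "d < 0")
      case True then show ?thesis by (rule Mneg_T)
    next
      case False
      then have "d = int (nat d)" "nat d < N" using \<open>d < n\<close> n_def by auto
      then show ?thesis using less.IH by metis
    qed
  qed
  show ?case
  proof
    fix x assume xM: "x \<in> M (int N)"
    obtain w c where wc: "x = w + c" "w \<in> W" "c \<in> C1 s V sM YM" using A8 by blast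
    define B where "B = (W \<inter> (\<Union>n. M n)) \<union> {YM a (-1) v | a v k d. a \<in> Vplus s V \<and> a \<in> V k \<and> v \<in> M d}"
    have "w \<in> span B"
      using wc(2) A7 span_mono[of "W \<inter> (\<Union>n. M n)" B] unfolding homogeneous_subspace_def B_def by blast
    moreover have "c \<in> span B"
    proof -
      have "span {YM a (-1) v | a v. a \<in> Vplus s V \<and> (\<exists>n. a \<in> V n)} \<subseteq> span B"
      proof (rule span_sub[OF vsM])
        fix y assume "y \<in> {YM a (-1) v | a v. a \<in> Vplus s V \<and> (\<exists>n. a \<in> V n)}"
        then obtain a v k where y: "y = YM a (-1) v" "a \<in> Vplus s V" "a \<in> V k" by blast
        have "v \<in> span (\<Union>n. M n)" using grM by (simp add: graded_def)
        then show "y \<in> span B" unfolding y(1)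
        proof (rule lin_span[OF linM1])
          fix v' assume "v' \<in> (\<Union>n. M n)"
          then show "YM a (-1) v' \<in> span B" using y unfolding B_def by (blast intro: span_base)
        qed
      qed
      then show ?thesis using wc(3) unfolding C1_def by blast
    qed
    ultimately have xB: "x \<in> span B" using wc(1) span_add by simp
    have hom: "\<exists>e. b \<in> M e" if "b \<in> B" for b
      using that gradM unfolding B_def by blast
    have xP: "x \<in> span {b\<in>B. b \<in> M n}" using graded_proj[OF vsM grM _ xB hom] xM n_def by simp
    have "span {b\<in>B. b \<in> M n} \<subseteq> Tset"
    proof (rule span_minimal[OF _ T_sub], rule subsetI)
      fix b assume bB: "b \<in> {b\<in>B. b \<in> M n}"
      show "b \<in> Tset"
      proof (cases "b \<in> W \<inter> (\<Union>n. M n)")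
        case True
        then have "b = modes YM [] b" "b \<in> W" "\<exists>k. b \<in> M k" by (auto simp: modes_def)
        then show ?thesis unfolding Tset_def by (intro span_base) fastforce
      next
        case False
        then obtain a v k d where b: "b = YM a (-1) v" "a \<in> Vplus s V" "a \<in> V k" "v \<in> M d"
          using bB unfolding B_def by blast
        show ?thesis
        proof (cases "b = 0")
          case True then show ?thesis by (simp add: subspace_0[OF T_sub])
        next
          case b0: False
          have "b \<in> M (d + k)" using gradM[OF b(3) b(4), of "d + k" "-1"] b(1) by simp
          then have ne: "n = d + k" using graded_unique[OF grM _ _ _ vsM] bB b0 by blast
          have k1: "k \<ge> 1"
          proof (rule ccontr)
            assume "\<not> k \<ge> 1"
            then have "a = 0" using Vplus0 b by simp
            then show False using b0 b by (simp add: YM0a)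
          qed
          have "a \<in> V (int (nat k))" using k1 b by simp
          moreover have "d < n" "d + int (nat k) - (-1) - 1 \<le> n" using ne k1 by auto
          ultimately show ?thesis using inner[OF H, of "nat k"] b by auto
        qed
      qed
    qed
    then show "x \<in> Tset" using xP by blast
  qed
qed

lemma T_UNIV: "Tset = UNIV"
proof -
  interpret vector_space sM by (rule vsM)
  have all: "M n \<subseteq> Tset" for n
  proof (cases "n < 0")
    case True then show ?thesis by (rule Mneg_T)
  next
    case False then show ?thesis using outer[of "nat n"] by simp
  qed
  have "span (\<Union>n. M n) \<subseteq> Tset" using all by (intro span_minimal[OF _ T_sub]) blast
  then show ?thesis using grM by (auto simp: graded_def)
qed

end
theorem proposition4p2:
  fixes s :: "complex \<Rightarrow> 'v \<Rightarrow> 'v::ab_group_add"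
    and V :: "int \<Rightarrow> 'v set" and Y :: "'v \<Rightarrow> int \<Rightarrow> 'v \<Rightarrow> 'v" and vac \<omega> :: 'v
    and sM :: "complex \<Rightarrow> 'm \<Rightarrow> 'm::ab_group_add"
    and M :: "int \<Rightarrow> 'm set" and YM :: "'v \<Rightarrow> int \<Rightarrow> 'm \<Rightarrow> 'm"
    and U :: "'v set" and W :: "'m set"
  assumes "is_VOA s V Y vac \<omega>"
    and "cft_type s V vac"
    and "homogeneous_subspace s V U"
    and "U \<subseteq> Vplus s V"
    and "module.span s {modes Y l vac | l. \<forall>(a, n)\<in>set l. a \<in> U \<and> n \<ge> 1} = UNIV"
    and "is_admissible s V Y vac sM M YM"
    and "homogeneous_subspace sM M W"
    and "UNIV = {w + c | w c. w \<in> W \<and> c \<in> C1 s V sM YM}"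
  shows "module.span sM {modes YM l w | l w. (\<forall>(u, n)\<in>set l. u \<in> U \<and> n \<ge> 1) \<and> w \<in> W \<and> (\<exists>k. w \<in> M k)} = UNIV
       \<and> module.span sM {modes YM l w | l w.
            (\<forall>(a, n)\<in>set l. a \<in> Vplus s V \<and> (\<exists>k. a \<in> V k) \<and> n \<ge> 1) \<and> w \<in> W} = UNIV"
proof -
  interpret P: P42 s V Y vac \<omega> sM M YM U W using assms by (simp add: P42_def)
  interpret vector_space sM by (rule P.vsM)
  have T: "P.Tset = UNIV" by (rule P.T_UNIV)
  have 1: "P.Tset \<subseteq> span {modes YM l w | l w. (\<forall>(u, n)\<in>set l. u \<in> U \<and> n \<ge> 1) \<and> w \<in> W \<and> (\<exists>k. w \<in> M k)}"
    unfolding P.Tset_def by (rule span_mono) fastforce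
  have 2: "P.Tset \<subseteq> span {modes YM l w | l w.
            (\<forall>(a, n)\<in>set l. a \<in> Vplus s V \<and> (\<exists>k. a \<in> V k) \<and> n \<ge> 1) \<and> w \<in> W}"
    unfolding P.Tset_def
  proof (rule span_mono, rule subsetI)
    fix x assume "x \<in> {modes YM l w | l w. (\<forall>(u,n)\<in>set l. u \<in> U \<and> (\<exists>p. u \<in> V p) \<and> n \<ge> 1) \<and> w \<in> W \<and> (\<exists>k. w \<in> M k)}"
    then obtain l w where "x = modes YM l w" "\<forall>(u,n)\<in>set l. u \<in> U \<and> (\<exists>p. u \<in> V p) \<and> n \<ge> 1" "w \<in> W"
      by blast
    moreover have "\<forall>(a, n)\<in>set l. a \<in> Vplus s V \<and> (\<exists>k. a \<in> V k) \<and> n \<ge> 1"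
      using calculation(2) assms(4) by blast
    ultimately show "x \<in> {modes YM l w | l w.
            (\<forall>(a, n)\<in>set l. a \<in> Vplus s V \<and> (\<exists>k. a \<in> V k) \<and> n \<ge> 1) \<and> w \<in> W}" by blast
  qed
  show ?thesis using 1 2 T by auto
qed

end
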